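(* Let $\delta\in(0,1)$ and $N,\ell,k\in\mathbb{N}$ satisfy $N\ge 10k\cdot n^{(1-\delta)\ell}$ and $k\ge 20$. If an $n$-vertex graph $G$ contains a clique of size $\lceil n^\delta\rceil$, then with probability at least $0.9$ over $G'\sim \mathrm{RGP}_{N,\ell}(G)$, the graph $G'$ contains a $k$-clique.
   Context: Randomized graph product: given an $n$-vertex graph $G=(V,E)$ and positive integers $N,\ell$, the random graph $G'=(V',E')\sim\mathrm{RGP}_{N,\ell}(G)$ is constructed as follows. For each $i\in[N]$, independently sample $\ell$ vertices uniformly at random from $V$ (independently of each other) and let $S_i\subseteq V$ be the set of sampled vertices. The vertex set is $V'=\{S_1,\dots,S_N\}$ (one vertex per index $i\in[N]$), and for distinct $i,j\in[N]$, $(S_i,S_j)\in E'$ iff $S_i\cup S_j$ induces a clique in $G$. *)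

theory Defs
  imports "HOL-Probability.Probability"
begin

definition simple_graph :: "'a set \<Rightarrow> ('a \<Rightarrow> 'a \<Rightarrow> bool) \<Rightarrow> bool" where
  "simple_graph V E \<longleftrightarrow> finite V \<and> (\<forall>u v. E u v \<longrightarrow> u \<in> V \<and> v \<in> V)
     \<and> (\<forall>u v. E u v \<longrightarrow> E v u) \<and> (\<forall>v. \<not> E v v)"

definition is_clique :: "'a set \<Rightarrow> ('a \<Rightarrow> 'a \<Rightarrow> bool) \<Rightarrow> 'a set \<Rightarrow> bool" where
  "is_clique V E C \<longleftrightarrow> C \<subseteq> V \<and> (\<forall>u\<in>C. \<forall>v\<in>C. u \<noteq> v \<longrightarrow> E u v)"

text \<open>A sample is a function s on [N] x [l] with values in V;
  drawing s uniformly among all such functions is the same as drawing all N*l vertices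
  independently and uniformly. The i-th vertex of G' is S_i = s ` ({i} x [l]).\<close>
definition rgp_samples :: "'a set \<Rightarrow> nat \<Rightarrow> nat \<Rightarrow> (nat \<times> nat \<Rightarrow> 'a) pmf" where
  "rgp_samples V N l = pmf_of_set (PiE ({..<N} \<times> {..<l}) (\<lambda>_. V))"

definition rgp_set :: "nat \<Rightarrow> (nat \<times> nat \<Rightarrow> 'a) \<Rightarrow> nat \<Rightarrow> 'a set" where
  "rgp_set l s i = s ` ({i} \<times> {..<l})"

definition rgp_edge :: "'a set \<Rightarrow> ('a \<Rightarrow> 'a \<Rightarrow> bool) \<Rightarrow> nat \<Rightarrow> nat \<Rightarrow> (nat \<times> nat \<Rightarrow> 'a) \<Rightarrow> nat \<Rightarrow> nat \<Rightarrow> bool" where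
  "rgp_edge V E N l s i j \<longleftrightarrow> i < N \<and> j < N \<and> i \<noteq> j \<and>
     is_clique V E (rgp_set l s i \<union> rgp_set l s j)"

definition rgp_has_clique :: "'a set \<Rightarrow> ('a \<Rightarrow> 'a \<Rightarrow> bool) \<Rightarrow> nat \<Rightarrow> nat \<Rightarrow> nat \<Rightarrow> (nat \<times> nat \<Rightarrow> 'a) \<Rightarrow> bool" where
  "rgp_has_clique V E N l k s \<longleftrightarrow>
     (\<exists>K. card K = k \<and> is_clique {..<N} (rgp_edge V E N l s) K)"

end

theory Submission
  imports Defs
begin

lemma card_A:
  assumes "B \<subseteq> {..<N}" "C \<subseteq> V" "finite V"
  shows "card {s \<in> PiE ({..<N}\<times>{..<l}) (\<lambda>_. V). \<forall>i\<in>B. rgp_set l s i \<subseteq> C}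
     = (card C ^ l) ^ card B * (card V ^ l) ^ (N - card B)"
proof -
  have eq: "{s \<in> PiE ({..<N}\<times>{..<l}) (\<lambda>_. V). \<forall>i\<in>B. rgp_set l s i \<subseteq> C}
      = PiE ({..<N}\<times>{..<l}) (\<lambda>x. if fst x \<in> B then C else V)"
  proof (intro set_eqI iffI)
    fix s assume s: "s \<in> {s \<in> PiE ({..<N}\<times>{..<l}) (\<lambda>_. V). \<forall>i\<in>B. rgp_set l s i \<subseteq> C}"
    show "s \<in> PiE ({..<N}\<times>{..<l}) (\<lambda>x. if fst x \<in> B then C else V)"
      unfolding PiE_iff
    proof (intro conjI ballI)
      fix x assume x: "x \<in> {..<N}\<times>{..<l}"
      show "s x \<in> (if fst x \<in> B then C else V)"
      proof (cases "fst x \<in> B")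
        case True
        then have "s x \<in> rgp_set l s (fst x)" using x unfolding rgp_set_def
          by (intro imageI) (auto simp: mem_Times_iff)
        then show ?thesis using True s by auto
      next
        case False then show ?thesis using s x by (auto simp: PiE_iff)
      qed
    qed (use s in \<open>auto simp: PiE_iff\<close>)
  next
    fix s assume s: "s \<in> PiE ({..<N}\<times>{..<l}) (\<lambda>x. if fst x \<in> B then C else V)"
    have "s \<in> PiE ({..<N}\<times>{..<l}) (\<lambda>_. V)"
      using s assms(2) unfolding PiE_iff by (metis (no_types, lifting) subsetD)
    moreover have "\<forall>i\<in>B. rgp_set l s i \<subseteq> C"
    proof (intro ballI subsetI)
      fix i y assume i: "i \<in> B" and y: "y \<in> rgp_set l s i"
      then obtain j where j: "j < l" "y = s (i, j)" unfolding rgp_set_def by auto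
      have "(i, j) \<in> {..<N}\<times>{..<l}" using i j assms(1) by auto
      then show "y \<in> C" using s i j unfolding PiE_iff by force
    qed
    ultimately show "s \<in> {s \<in> PiE ({..<N}\<times>{..<l}) (\<lambda>_. V). \<forall>i\<in>B. rgp_set l s i \<subseteq> C}" by blast
  qed
  have "card (PiE ({..<N}\<times>{..<l}) (\<lambda>x. if fst x \<in> B then C else V))
     = (\<Prod>x\<in>{..<N}\<times>{..<l}. card (if fst x \<in> B then C else V))"
    by (simp add: card_PiE)
  also have "\<dots> = (\<Prod>i<N. \<Prod>j<l. card (if i \<in> B then C else V))"
    using prod.cartesian_product[where g="\<lambda>i j. card (if i \<in> B then C else V)" and A="{..<N}" and B="{..<l}"]
    by (simp add: case_prod_beta del: prod_constant)
  also have "\<dots> = (\<Prod>i<N. if i \<in> B then card C ^ l else card V ^ l)"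
    by (rule prod.cong) auto
  also have "\<dots> = (card C ^ l) ^ card ({..<N} \<inter> {i. i\<in>B}) * (card V ^ l) ^ card ({..<N} \<inter> - {i. i\<in>B})"
    by (simp add: prod.If_cases)
  also have "{..<N} \<inter> {i. i\<in>B} = B" using assms(1) by auto
  also have "{..<N} \<inter> - {i. i\<in>B} = {..<N} - B" by auto
  also have "card ({..<N} - B) = N - card B" using assms(1)
    by (simp add: card_Diff_subset finite_subset)
  finally show ?thesis using eq by simp
qed

lemma clique_sub: "A \<subseteq> C \<Longrightarrow> is_clique V E C \<Longrightarrow> is_clique V E A"
  unfolding is_clique_def by (meson subsetD subset_trans)

lemma cnt: "finite A \<Longrightarrow> real (card {x\<in>A. P x}) = (\<Sum>x\<in>A. if P x then 1 else 0)"
  by (simp add: sum.If_cases Int_def conj_commute)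

theorem lemma2p1:
  fixes V :: "'a set" and E :: "'a \<Rightarrow> 'a \<Rightarrow> bool" and n N l k :: nat and \<delta> :: real
  assumes "simple_graph V E" and "card V = n" and "n \<ge> 1"
    and "0 < \<delta>" and "\<delta> < 1"
    and "real N \<ge> 10 * real k * real n powr ((1 - \<delta>) * real l)"
    and "k \<ge> 20"
    and "\<exists>C. is_clique V E C \<and> card C = nat \<lceil>real n powr \<delta>\<rceil>"
  shows "measure_pmf.prob (rgp_samples V N l) {s. rgp_has_clique V E N l k s} \<ge> 0.9"
proof -
  obtain C where C: "is_clique V E C" "card C = nat \<lceil>real n powr \<delta>\<rceil>" using assms(8) by blast
  have finV: "finite V" using assms(2,3) card.infinite by fastforce
  have CV: "C \<subseteq> V" using C(1) unfolding is_clique_def by blast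
  define \<Omega> where "\<Omega> = PiE ({..<N}\<times>{..<l}) (\<lambda>_. V)"
  define F where "F = (\<lambda>i s. rgp_set l s i \<subseteq> C)"
  define M where "M = real (card \<Omega>)"
  define p where "p = (real (card C) / real n) ^ l"
  have finO: "finite \<Omega>" unfolding \<Omega>_def using finV by (simp add: finite_PiE)
  have npos: "real n > 0" using assms(3) by simp
  have cardO: "card \<Omega> = (n ^ l) ^ N"
    using card_A[of "{}" N C V l] CV finV assms(2) by (simp add: \<Omega>_def)
  have Mpos: "M > 0" unfolding M_def cardO using assms(3) by simp
  have cntB: "real (card {s\<in>\<Omega>. \<forall>i\<in>B. F i s}) = M * p ^ card B" if B: "B \<subseteq> {..<N}" for B
  proof -
    have cB: "card B \<le> N" using B card_mono[OF _ B] by simp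
    have "real (card {s\<in>\<Omega>. \<forall>i\<in>B. F i s}) = (real (card C) ^ l) ^ card B * (real n ^ l) ^ (N - card B)"
      using card_A[OF B CV finV, of l] assms(2) unfolding \<Omega>_def F_def by simp
    moreover have "M = (real n ^ l) ^ card B * (real n ^ l) ^ (N - card B)"
      unfolding M_def cardO using cB by (simp flip: power_add)
    moreover have "p ^ card B = (real (card C) ^ l) ^ card B / (real n ^ l) ^ card B"
      unfolding p_def by (simp add: power_divide)
    ultimately show ?thesis using npos by simp
  qed
  define X where "X = (\<lambda>s. real (card {i\<in>{..<N}. F i s}))"
  have Xeq: "X s = (\<Sum>i<N. if F i s then 1 else 0)" for s
    unfolding X_def by (rule cnt) simp
  define \<mu> where "\<mu> = real N * p"
  have S1: "(\<Sum>s\<in>\<Omega>. X s) = M * \<mu>"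
  proof -
    have "(\<Sum>s\<in>\<Omega>. X s) = (\<Sum>s\<in>\<Omega>. \<Sum>i<N. if F i s then 1 else 0)"
      by (simp add: Xeq)
    also have "\<dots> = (\<Sum>i<N. \<Sum>s\<in>\<Omega>. if F i s then 1 else 0)" by (rule sum.swap)
    also have "\<dots> = (\<Sum>i<N. M * p)"
    proof (rule sum.cong)
      fix i assume "i \<in> {..<N}"
      then have "real (card {s\<in>\<Omega>. \<forall>i'\<in>{i}. F i' s}) = M * p ^ card {i}" by (intro cntB) auto
      then show "(\<Sum>s\<in>\<Omega>. if F i s then 1 else 0) = M * p" using finO by (simp add: cnt)
    qed simp
    finally show ?thesis unfolding \<mu>_def by simp
  qed
  have S2: "(\<Sum>s\<in>\<Omega>. X s ^ 2) = M * (real N * p + real N * (real N - 1) * p ^ 2)"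
  proof -
    have "(\<Sum>s\<in>\<Omega>. X s ^ 2) = (\<Sum>s\<in>\<Omega>. \<Sum>i<N. \<Sum>j<N. if F i s \<and> F j s then 1 else 0)"
    proof (rule sum.cong)
      fix s
      have "X s ^ 2 = (\<Sum>i<N. if F i s then 1 else 0) * (\<Sum>j<N. if F j s then 1 else (0::real))"
        by (simp add: Xeq power2_eq_square)
      also have "\<dots> = (\<Sum>i<N. \<Sum>j<N. if F i s \<and> F j s then 1 else 0)"
        unfolding sum_product by (intro sum.cong refl) simp
      finally show "X s ^ 2 = (\<Sum>i<N. \<Sum>j<N. if F i s \<and> F j s then 1 else 0)" .
    qed simp
    also have "\<dots> = (\<Sum>i<N. \<Sum>s\<in>\<Omega>. \<Sum>j<N. if F i s \<and> F j s then 1 else 0)" by (rule sum.swap)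
    also have "\<dots> = (\<Sum>i<N. \<Sum>j<N. \<Sum>s\<in>\<Omega>. if F i s \<and> F j s then 1 else 0)"
      by (intro sum.cong refl sum.swap)
    also have "\<dots> = (\<Sum>i<N. \<Sum>j<N. M * p ^ card {i, j})"
    proof (intro sum.cong refl)
      fix i j assume "i \<in> {..<N}" "j \<in> {..<N}"
      then have "real (card {s\<in>\<Omega>. \<forall>i'\<in>{i, j}. F i' s}) = M * p ^ card {i, j}" by (intro cntB) auto
      then show "(\<Sum>s\<in>\<Omega>. if F i s \<and> F j s then 1 else 0) = M * p ^ card {i, j}" using finO by (simp add: cnt)
    qed
    also have "\<dots> = (\<Sum>i<N. M * (p + (real N - 1) * p ^ 2))"
    proof (rule sum.cong[OF refl])
      fix i assume i: "i \<in> {..<N}"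
      have "(\<Sum>j<N. M * p ^ card {i, j}) = M * p ^ card {i, i} + (\<Sum>j\<in>{..<N} - {i}. M * p ^ card {i, j})"
        using i by (simp add: sum.remove)
      also have "(\<Sum>j\<in>{..<N} - {i}. M * p ^ card {i, j}) = (\<Sum>j\<in>{..<N} - {i}. M * p ^ 2)"
        by (rule sum.cong) (auto simp: card_insert_if power2_eq_square)
      also have "\<dots> = (real N - 1) * (M * p ^ 2)" using i by (simp add: of_nat_diff)
      finally show "(\<Sum>j<N. M * p ^ card {i, j}) = M * (p + (real N - 1) * p ^ 2)"
        by (simp add: algebra_simps)
    qed
    finally show ?thesis by (simp add: algebra_simps)
  qed
  have S3: "(\<Sum>s\<in>\<Omega>. (X s - \<mu>) ^ 2) \<le> M * \<mu>"
  proof -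
    have "(\<Sum>s\<in>\<Omega>. (X s - \<mu>) ^ 2) = (\<Sum>s\<in>\<Omega>. X s ^ 2) - 2 * \<mu> * (\<Sum>s\<in>\<Omega>. X s) + M * \<mu>^2"
    proof -
      have "(\<Sum>s\<in>\<Omega>. (X s - \<mu>) ^ 2) = (\<Sum>s\<in>\<Omega>. X s ^ 2 - (2 * \<mu>) * X s + \<mu>^2)"
        by (rule sum.cong) (auto simp: power2_diff algebra_simps)
      also have "\<dots> = (\<Sum>s\<in>\<Omega>. X s ^ 2) - (\<Sum>s\<in>\<Omega>. (2 * \<mu>) * X s) + (\<Sum>s\<in>\<Omega>. \<mu>^2)"
        by (simp add: sum.distrib sum_subtractf)
      also have "(\<Sum>s\<in>\<Omega>. (2 * \<mu>) * X s) = 2 * \<mu> * (\<Sum>s\<in>\<Omega>. X s)"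
        by (rule sum_distrib_left[symmetric])
      finally show ?thesis by (simp add: M_def)
    qed
    also have "\<dots> = M * (\<mu> - real N * p^2)"
      unfolding S1 S2 \<mu>_def by (simp add: algebra_simps power2_eq_square)
    also have "\<dots> \<le> M * \<mu>" using Mpos by (simp add: p_def)
    finally show ?thesis .
  qed
  have cpos: "real (card C) \<ge> real n powr \<delta>" using C(2) by linarith
  have "real (card C) / real n \<ge> real n powr \<delta> / real n"
    using cpos npos by (simp add: divide_right_mono)
  also have "real n powr \<delta> / real n = real n powr (\<delta> - 1)"
    using npos by (simp add: powr_diff)
  finally have cn: "real (card C) / real n \<ge> real n powr (\<delta> - 1)" .
  have pb: "p \<ge> real n powr ((\<delta> - 1) * real l)"
  proof -
    have "real n powr ((\<delta> - 1) * real l) = (real n powr (\<delta> - 1)) ^ l"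
      using npos by (simp add: powr_powr[symmetric] powr_realpow)
    also have "\<dots> \<le> p" unfolding p_def by (rule power_mono[OF cn]) simp
    finally show ?thesis .
  qed
  have mu: "\<mu> \<ge> 10 * real k"
  proof -
    have "10 * real k = 10 * real k * (real n powr ((1 - \<delta>) * real l) * real n powr ((\<delta> - 1) * real l))"
      using npos by (simp add: powr_add[symmetric] algebra_simps)
    also have "\<dots> = (10 * real k * real n powr ((1 - \<delta>) * real l)) * real n powr ((\<delta> - 1) * real l)"
      by (simp only: mult.assoc)
    also have "\<dots> \<le> real N * p"
      using assms(6) pb by (intro mult_mono) auto
    finally show ?thesis unfolding \<mu>_def .
  qed
  define bad where "bad = {s\<in>\<Omega>. X s < real k}"
  have badsub: "bad \<subseteq> \<Omega>" unfolding bad_def by blast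
  have "real (card bad) * (\<mu> - real k)^2 = (\<Sum>s\<in>bad. (\<mu> - real k)^2)" by simp
  also have "\<dots> \<le> (\<Sum>s\<in>bad. (X s - \<mu>)^2)"
  proof (rule sum_mono)
    fix s assume "s \<in> bad"
    then have "X s < real k" unfolding bad_def by blast
    then have "(\<mu> - real k)^2 \<le> (\<mu> - X s)^2" using mu
      by (intro power_mono) (auto simp: X_def)
    then show "(\<mu> - real k)^2 \<le> (X s - \<mu>)^2" by (simp add: power2_commute)
  qed
  also have "\<dots> \<le> (\<Sum>s\<in>\<Omega>. (X s - \<mu>)^2)"
    by (rule sum_mono2[OF finO badsub]) simp
  also have "\<dots> \<le> M * \<mu>" by (rule S3)
  finally have b1: "real (card bad) * (\<mu> - real k)^2 \<le> M * \<mu>" .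
  have kk: "real k \<ge> 20" using assms(7) by simp
  have "10 * \<mu> \<le> (\<mu> - real k)^2"
  proof -
    have "\<mu> - real k \<ge> 0.9 * \<mu>" using mu kk by linarith
    then have "(0.9 * \<mu>)^2 \<le> (\<mu> - real k)^2" using mu kk by (intro power_mono) auto
    moreover have "10 * \<mu> \<le> (0.9 * \<mu>)^2" using mu kk by (simp add: power2_eq_square)
    ultimately show ?thesis by linarith
  qed
  then have "real (card bad) * (10 * \<mu>) \<le> M * \<mu>"
    using b1 mult_left_mono[OF \<open>10 * \<mu> \<le> (\<mu> - real k)^2\<close>, of "real (card bad)"] by simp
  then have bad10: "real (card bad) * 10 \<le> M" using mu kk by (simp add: mult_le_cancel_right)
  have good: "\<Omega> - bad \<subseteq> {s. rgp_has_clique V E N l k s}"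
  proof
    fix s assume s: "s \<in> \<Omega> - bad"
    then have "X s \<ge> real k" unfolding bad_def by auto
    then have "card {i\<in>{..<N}. F i s} \<ge> k" unfolding X_def by simp
    then obtain K where K: "K \<subseteq> {i\<in>{..<N}. F i s}" "card K = k"
      by (meson obtain_subset_with_card_n)
    have "is_clique {..<N} (rgp_edge V E N l s) K"
      unfolding is_clique_def
    proof (intro conjI ballI impI)
      show "K \<subseteq> {..<N}" using K by blast
    next
      fix u v assume uv: "u \<in> K" "v \<in> K" "u \<noteq> v"
      then have "F u s" "F v s" "u < N" "v < N" using K by auto
      then have sub: "rgp_set l s u \<union> rgp_set l s v \<subseteq> C" unfolding F_def by blast
      have "is_clique V E (rgp_set l s u \<union> rgp_set l s v)"
        using sub C(1) by (rule clique_sub)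
      then show "rgp_edge V E N l s u v" unfolding rgp_edge_def using uv \<open>u < N\<close> \<open>v < N\<close> by blast
    qed
    then show "s \<in> {s. rgp_has_clique V E N l k s}" unfolding rgp_has_clique_def using K by blast
  qed
  have Vne: "V \<noteq> {}" using assms(2,3) by auto
  have One: "\<Omega> \<noteq> {}" unfolding \<Omega>_def using Vne by (simp add: PiE_eq_empty_iff)
  have eqP: "measure_pmf.prob (rgp_samples V N l) {s. rgp_has_clique V E N l k s}
      = real (card (\<Omega> \<inter> {s. rgp_has_clique V E N l k s})) / M"
    unfolding rgp_samples_def M_def \<Omega>_def[symmetric] using One finO by (simp add: measure_pmf_of_set)
  have "real (card (\<Omega> - bad)) \<le> real (card (\<Omega> \<inter> {s. rgp_has_clique V E N l k s}))"
    using good finO by (intro of_nat_mono card_mono) auto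
  then have "real (card (\<Omega> - bad)) / M \<le> real (card (\<Omega> \<inter> {s. rgp_has_clique V E N l k s})) / M"
    using Mpos by (simp add: divide_right_mono)
  moreover have "real (card (\<Omega> - bad)) = M - real (card bad)"
    unfolding M_def using badsub finO by (simp add: card_Diff_subset finite_subset of_nat_diff card_mono)
  ultimately have "(M - real (card bad)) / M \<le> real (card (\<Omega> \<inter> {s. rgp_has_clique V E N l k s})) / M"
    by simp
  moreover have "(M - real (card bad)) / M \<ge> 0.9" using bad10 Mpos by (simp add: field_simps)
  ultimately show ?thesis unfolding eqP by linarith
qed

end
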